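(* Let $(M,d)$ be a bounded metric space with metric normal structure such that $\mathcal A(M)$ is compact. Let $\mathcal S$ be a group acting on $M$ such that each $s\in\mathcal S$ is an orbit-nonexpansive mapping. Then there is $x\in M$ with $s(x)=x$ for all $s\in\mathcal S$.
   Context: For a metric space $(M,d)$, a mapping $T:M\to M$ and $x\in M$, the orbit of $x$ is $o_T(x)=\{x\}\cup\{T^nx:n\in\mathbb N\}$. For $x\in M$ and bounded $A\subseteq M$, $D(x,A)=\sup\{d(x,a):a\in A\}$ and $\delta(A)=\sup\{d(x,y):x,y\in A\}$. A mapping $T:M\to M$ is orbit-nonexpansive if $d(Tx,Ty)\le D(x,o_T(y))$ for all $x,y\in M$. A group $\mathcal S$ acts on $M$ if each $s\in\mathcal S$ defines a map $M\to M$, the identity element acts as the identity map, and $(s\cdot t)(x)=s(t(x))$. A subset of $M$ is admissible if it is an intersection of closed balls of $M$; $\mathcal A(M)$ denotes the family of admissible sets. $\mathcal A(M)$ is compact if every subfamily of $\mathcal A(M)$ all of whose finite intersections are nonempty has nonempty intersection. $(M,d)$ has metric normal structure if for every admissible set $A$ with more than one point there exists $z_A\in A$ with $D(z_A,A)<\delta(A)$. *)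

theory Defs
  imports "HOL-Analysis.Analysis" "HOL-Algebra.Group"
begin

definition orbit :: "('a \<Rightarrow> 'a) \<Rightarrow> 'a \<Rightarrow> 'a set" where
  "orbit T x = {x} \<union> {(T ^^ n) x | n. n \<ge> 1}"

definition Dist_set :: "('a \<Rightarrow> 'a \<Rightarrow> real) \<Rightarrow> 'a \<Rightarrow> 'a set \<Rightarrow> real" where
  "Dist_set d x A = (SUP a\<in>A. d x a)"

definition diam_set :: "('a \<Rightarrow> 'a \<Rightarrow> real) \<Rightarrow> 'a set \<Rightarrow> real" where
  "diam_set d A = (SUP p\<in>A \<times> A. d (fst p) (snd p))"

definition orbit_nonexpansive :: "'a set \<Rightarrow> ('a \<Rightarrow> 'a \<Rightarrow> real) \<Rightarrow> ('a \<Rightarrow> 'a) \<Rightarrow> bool" where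
  "orbit_nonexpansive M d T \<longleftrightarrow>
     (\<forall>x\<in>M. \<forall>y\<in>M. d (T x) (T y) \<le> Dist_set d x (orbit T y))"

definition admissible :: "'a set \<Rightarrow> ('a \<Rightarrow> 'a \<Rightarrow> real) \<Rightarrow> 'a set \<Rightarrow> bool" where
  "admissible M d A \<longleftrightarrow>
     (\<exists>\<B>. \<B> \<subseteq> {Metric_space.mcball M d x r | x r. x \<in> M \<and> 0 \<le> r} \<and> A = M \<inter> \<Inter>\<B>)"

definition admissible_compact :: "'a set \<Rightarrow> ('a \<Rightarrow> 'a \<Rightarrow> real) \<Rightarrow> bool" where
  "admissible_compact M d \<longleftrightarrow>
     (\<forall>\<F>. \<F> \<subseteq> Collect (admissible M d) \<longrightarrow>
        (\<forall>\<G>. \<G> \<subseteq> \<F> \<and> finite \<G> \<and> \<G> \<noteq> {} \<longrightarrow> \<Inter>\<G> \<noteq> {}) \<longrightarrow>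
        M \<inter> \<Inter>\<F> \<noteq> {})"

definition metric_normal_structure :: "'a set \<Rightarrow> ('a \<Rightarrow> 'a \<Rightarrow> real) \<Rightarrow> bool" where
  "metric_normal_structure M d \<longleftrightarrow>
     (\<forall>A. admissible M d A \<and> (\<exists>x\<in>A. \<exists>y\<in>A. x \<noteq> y) \<longrightarrow>
        (\<exists>z\<in>A. Dist_set d z A < diam_set d A))"

definition group_acts_on :: "('g, 'b) monoid_scheme \<Rightarrow> 'a set \<Rightarrow> ('g \<Rightarrow> 'a \<Rightarrow> 'a) \<Rightarrow> bool" where
  "group_acts_on G M \<phi> \<longleftrightarrow>
     (\<forall>s\<in>carrier G. \<forall>x\<in>M. \<phi> s x \<in> M) \<and>
     (\<forall>x\<in>M. \<phi> \<one>\<^bsub>G\<^esub> x = x) \<and>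
     (\<forall>s\<in>carrier G. \<forall>t\<in>carrier G. \<forall>x\<in>M. \<phi> (s \<otimes>\<^bsub>G\<^esub> t) x = \<phi> s (\<phi> t x))"

end

theory Submission
  imports Defs
begin

lemma adm_subset: "admissible M d A \<Longrightarrow> A \<subseteq> M"
  unfolding admissible_def by (elim exE conjE) simp

lemma adm_Inter:
  assumes ne: "\<C> \<noteq> {}" and all: "\<forall>K\<in>\<C>. admissible M d K"
  shows "admissible M d (\<Inter>\<C>)"
proof -
  define balls where "balls = {Metric_space.mcball M d x r | x r. x \<in> M \<and> 0 \<le> r}"
  define \<B> where "\<B> = {b\<in>balls. \<exists>K\<in>\<C>. K \<subseteq> b}"
  have char: "M \<inter> \<Inter>{b\<in>balls. K \<subseteq> b} \<subseteq> K" if "K \<in> \<C>" for K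
  proof -
    from all that have "admissible M d K" by blast
    then obtain \<B>' where B': "\<B>' \<subseteq> balls" "K = M \<inter> \<Inter>\<B>'"
      unfolding admissible_def balls_def by blast
    then have "\<B>' \<subseteq> {b\<in>balls. K \<subseteq> b}" by blast
    then have "\<Inter>{b\<in>balls. K \<subseteq> b} \<subseteq> \<Inter>\<B>'" by (rule Inter_anti_mono)
    then show ?thesis using B'(2) by blast
  qed
  have sub: "\<Inter>\<C> \<subseteq> M"
  proof -
    obtain K where "K \<in> \<C>" using ne by blast
    moreover have "admissible M d K" using all \<open>K \<in> \<C>\<close> by blast
    ultimately have "\<Inter>\<C> \<subseteq> K" "K \<subseteq> M" using adm_subset by auto
    then show ?thesis by (rule order_trans)
  qed
  have "\<Inter>\<C> = M \<inter> \<Inter>\<B>"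
  proof
    show "\<Inter>\<C> \<subseteq> M \<inter> \<Inter>\<B>"
    proof
      fix x assume x: "x \<in> \<Inter>\<C>"
      have "x \<in> b" if "b \<in> \<B>" for b
      proof -
        from that obtain K where "K \<in> \<C>" "K \<subseteq> b" unfolding \<B>_def by blast
        then show ?thesis using x by blast
      qed
      then show "x \<in> M \<inter> \<Inter>\<B>" using x sub by blast
    qed
    show "M \<inter> \<Inter>\<B> \<subseteq> \<Inter>\<C>"
    proof
      fix x assume x: "x \<in> M \<inter> \<Inter>\<B>"
      show "x \<in> \<Inter>\<C>"
      proof
        fix K assume K: "K \<in> \<C>"
        have "{b\<in>balls. K \<subseteq> b} \<subseteq> \<B>" unfolding \<B>_def using K by blast
        then have "x \<in> M \<inter> \<Inter>{b\<in>balls. K \<subseteq> b}" using x by blast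
        then show "x \<in> K" using char[OF K] by blast
      qed
    qed
  qed
  moreover have "\<B> \<subseteq> balls" unfolding \<B>_def by blast
  ultimately show ?thesis unfolding admissible_def balls_def by blast
qed
theorem corollary3p4:
  fixes M :: "'a set" and d :: "'a \<Rightarrow> 'a \<Rightarrow> real"
    and G :: "('g, 'b) monoid_scheme" and \<phi> :: "'g \<Rightarrow> 'a \<Rightarrow> 'a"
  assumes "Metric_space M d"
    and "M \<noteq> {}"
    and "Metric_space.mbounded M d M"
    and "metric_normal_structure M d"
    and "admissible_compact M d"
    and "group G"
    and "group_acts_on G M \<phi>"
    and "\<forall>s\<in>carrier G. orbit_nonexpansive M d (\<phi> s)"
  shows "\<exists>x\<in>M. \<forall>s\<in>carrier G. \<phi> s x = x"
proof -
  interpret Metric_space M d by fact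
  interpret group G by fact
  have act1: "\<And>s x. s \<in> carrier G \<Longrightarrow> x \<in> M \<Longrightarrow> \<phi> s x \<in> M"
   and act2: "\<And>x. x \<in> M \<Longrightarrow> \<phi> \<one>\<^bsub>G\<^esub> x = x"
   and act3: "\<And>s t x. s \<in> carrier G \<Longrightarrow> t \<in> carrier G \<Longrightarrow> x \<in> M \<Longrightarrow> \<phi> (s \<otimes>\<^bsub>G\<^esub> t) x = \<phi> s (\<phi> t x)"
    using assms(7) unfolding group_acts_on_def by blast+
  obtain c B where cB: "M \<subseteq> mcball c B" using assms(3) unfolding mbounded_def by blast
  have dbound: "d x y \<le> 2 * B" if "x \<in> M" "y \<in> M" for x y
  proof -
    have "d c x \<le> B" "d c y \<le> B" using cB that by auto
    moreover have "d x y \<le> d x c + d c y" using triangle that cB by auto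
    moreover have "d x c = d c x" using commute by simp
    ultimately show ?thesis by linarith
  qed
  have bdd: "bdd_above (d x ` A)" if "A \<subseteq> M" "x \<in> M" for x A
  proof (rule bdd_aboveI[of _ "2*B"])
    fix y assume "y \<in> d x ` A"
    then obtain a where "a \<in> A" "y = d x a" by blast
    then show "y \<le> 2*B" using dbound that by blast
  qed
  have Dle: "Dist_set d x A \<le> r \<longleftrightarrow> (\<forall>a\<in>A. d x a \<le> r)" if "A \<subseteq> M" "A \<noteq> {}" "x \<in> M" for x A r
    unfolding Dist_set_def using cSUP_le_iff[OF that(2) bdd[OF that(1,3)]] by simp
  have Dup: "d x a \<le> Dist_set d x A" if "A \<subseteq> M" "a \<in> A" "x \<in> M" for x A a
    unfolding Dist_set_def using cSUP_upper[OF that(2) bdd[OF that(1,3)]] by simp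
  define inv_set where "inv_set K \<longleftrightarrow> (\<forall>s\<in>carrier G. \<forall>x\<in>K. \<phi> s x \<in> K)" for K
  define \<K> where "\<K> = {K. admissible M d K \<and> K \<noteq> {} \<and> inv_set K}"
  have "\<exists>m\<in>\<K>. \<forall>a\<in>\<K>. a \<subseteq> m \<longrightarrow> a = m"
  proof (rule predicate_Zorn)
    show "partial_order_on \<K> (relation_of (\<lambda>a b. b \<subseteq> a) \<K>)"
      by (rule partial_order_on_relation_ofI) auto
  next
    fix C assume C: "C \<in> Chains (relation_of (\<lambda>a b. b \<subseteq> a) \<K>)"
    show "\<exists>u\<in>\<K>. \<forall>a\<in>C. u \<subseteq> a"
    proof (cases "C = {}")
      case True
      have "admissible M d M" unfolding admissible_def
        by (rule exI[of _ "{}"]) simp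
      moreover have "inv_set M" unfolding inv_set_def using act1 by blast
      ultimately have "M \<in> \<K>" unfolding \<K>_def using assms(2) by blast
      then show ?thesis using True by blast
    next
      case False
      have CK: "C \<subseteq> \<K>"
      proof
        fix a assume a: "a \<in> C"
        then have "(a,a) \<in> relation_of (\<lambda>a b. b \<subseteq> a) \<K>" using C unfolding Chains_def by blast
        then show "a \<in> \<K>" by (simp add: relation_of_def)
      qed
      have tot: "X \<subseteq> Y \<or> Y \<subseteq> X" if "X \<in> C" "Y \<in> C" for X Y
      proof -
        have "(X,Y) \<in> relation_of (\<lambda>a b. b \<subseteq> a) \<K> \<or> (Y,X) \<in> relation_of (\<lambda>a b. b \<subseteq> a) \<K>"
          using C that unfolding Chains_def by blast
        then show ?thesis by (auto simp: relation_of_def)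
      qed
      have CA: "\<forall>K\<in>C. admissible M d K" using CK unfolding \<K>_def by blast
      have adm: "admissible M d (\<Inter>C)" using adm_Inter[OF False CA] .
      have fip: "\<forall>\<G>. \<G> \<subseteq> C \<and> finite \<G> \<and> \<G> \<noteq> {} \<longrightarrow> \<Inter>\<G> \<noteq> {}"
      proof (intro allI impI)
        fix \<G> assume g: "\<G> \<subseteq> C \<and> finite \<G> \<and> \<G> \<noteq> {}"
        have "subset.chain UNIV \<G>" unfolding subset_chain_def using g tot by blast
        then have "\<Inter>\<G> \<in> \<G>" using Inter_in_chain g by blast
        moreover have "\<forall>X\<in>\<G>. X \<noteq> {}" using g CK unfolding \<K>_def by blast
        ultimately show "\<Inter>\<G> \<noteq> {}" by blast
      qed
      have CA': "C \<subseteq> Collect (admissible M d)" using CA by blast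
      have "\<forall>\<F>. \<F> \<subseteq> Collect (admissible M d) \<longrightarrow>
        (\<forall>\<G>. \<G> \<subseteq> \<F> \<and> finite \<G> \<and> \<G> \<noteq> {} \<longrightarrow> \<Inter>\<G> \<noteq> {}) \<longrightarrow>
        M \<inter> \<Inter>\<F> \<noteq> {}" using assms(5) by (simp only: admissible_compact_def)
      then have "C \<subseteq> Collect (admissible M d) \<longrightarrow>
        (\<forall>\<G>. \<G> \<subseteq> C \<and> finite \<G> \<and> \<G> \<noteq> {} \<longrightarrow> \<Inter>\<G> \<noteq> {}) \<longrightarrow>
        M \<inter> \<Inter>C \<noteq> {}" by (rule spec)
      then have "M \<inter> \<Inter>C \<noteq> {}" using CA' fip by blast
      then have "\<Inter>C \<noteq> {}" by blast
      moreover have "inv_set (\<Inter>C)" unfolding inv_set_def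
      proof (intro ballI)
        fix s x assume "s \<in> carrier G" "x \<in> \<Inter>C"
        then show "\<phi> s x \<in> \<Inter>C" using CK unfolding \<K>_def inv_set_def by blast
      qed
      ultimately have "\<Inter>C \<in> \<K>" using adm unfolding \<K>_def by blast
      then show ?thesis by blast
    qed
  qed
  then obtain K where K: "K \<in> \<K>" and Kmin: "\<And>A. A \<in> \<K> \<Longrightarrow> A \<subseteq> K \<Longrightarrow> A = K" by blast
  have Kadm: "admissible M d K" and Kne: "K \<noteq> {}" and Kinv: "inv_set K"
    using K unfolding \<K>_def by auto
  have KM: "K \<subseteq> M" using Kadm by (rule adm_subset)
  have orbK: "orbit (\<phi> s) y \<subseteq> K" if "s \<in> carrier G" "y \<in> K" for s y
  proof -
    have "(\<phi> s ^^ n) y \<in> K" for n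
    proof (induction n)
      case 0 then show ?case using that by simp
    next
      case (Suc n) then show ?case using that Kinv unfolding inv_set_def by simp
    qed
    then show ?thesis unfolding orbit_def using that by blast
  qed
  have single: "\<not> (\<exists>x\<in>K. \<exists>y\<in>K. x \<noteq> y)"
  proof
    assume two: "\<exists>x\<in>K. \<exists>y\<in>K. x \<noteq> y"
    have "\<exists>z\<in>K. Dist_set d z K < diam_set d K"
      using assms(4) Kadm two unfolding metric_normal_structure_def by blast
    then obtain z0 where z0: "z0 \<in> K" "Dist_set d z0 K < diam_set d K" by blast
    define r where "r = Dist_set d z0 K"
    have z0M: "z0 \<in> M" using z0(1) KM by blast
    have "d z0 z0 \<le> r" unfolding r_def using Dup[OF KM z0(1) z0M] .
    then have r0: "0 \<le> r" using z0M by simp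
    define C where "C = K \<inter> (\<Inter>y\<in>K. mcball y r)"
    have memC: "z \<in> C \<longleftrightarrow> z \<in> K \<and> Dist_set d z K \<le> r" for z
    proof (cases "z \<in> K")
      case True
      then have zM: "z \<in> M" using KM by blast
      have "z \<in> C \<longleftrightarrow> (\<forall>y\<in>K. d y z \<le> r)" unfolding C_def using True zM KM by auto
      also have "\<dots> \<longleftrightarrow> (\<forall>y\<in>K. d z y \<le> r)" using commute by simp
      also have "\<dots> \<longleftrightarrow> Dist_set d z K \<le> r" using Dle[OF KM Kne zM] by simp
      finally show ?thesis using True by simp
    qed (simp add: C_def)
    have Cadm: "admissible M d C"
    proof -
      have "admissible M d (\<Inter>(insert K ((\<lambda>y. mcball y r) ` K)))"
      proof (rule adm_Inter)
        show "\<forall>A\<in>insert K ((\<lambda>y. mcball y r) ` K). admissible M d A"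
        proof
          fix A assume "A \<in> insert K ((\<lambda>y. mcball y r) ` K)"
          then show "admissible M d A"
          proof
            assume "A = K" then show ?thesis using Kadm by simp
          next
            assume "A \<in> (\<lambda>y. mcball y r) ` K"
            then obtain y where y: "y \<in> K" "A = mcball y r" by blast
            have "A = M \<inter> \<Inter>{mcball y r}" using y(2) mcball_subset_mspace by auto
            moreover have "{mcball y r} \<subseteq> {mcball x r | x r. x \<in> M \<and> 0 \<le> r}" using y(1) KM r0 by blast
            ultimately show ?thesis unfolding admissible_def by blast
          qed
        qed
      qed simp
      moreover have "\<Inter>(insert K ((\<lambda>y. mcball y r) ` K)) = C" unfolding C_def by simp
      ultimately show ?thesis by simp
    qed
    have Cinv: "inv_set C" unfolding inv_set_def
    proof (intro ballI)
      fix s z assume s: "s \<in> carrier G" and z: "z \<in> C"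
      have zK: "z \<in> K" and zr: "Dist_set d z K \<le> r" using z memC by auto
      have zM: "z \<in> M" using zK KM by blast
      have szK: "\<phi> s z \<in> K" using Kinv s zK unfolding inv_set_def by blast
      have szM: "\<phi> s z \<in> M" using szK KM by blast
      have "\<forall>a\<in>K. d (\<phi> s z) a \<le> r"
      proof
        fix y assume y: "y \<in> K"
        define y' where "y' = \<phi> (inv\<^bsub>G\<^esub> s) y"
        have invs: "inv\<^bsub>G\<^esub> s \<in> carrier G" using s by simp
        have y'K: "y' \<in> K" using Kinv y invs unfolding y'_def inv_set_def by blast
        have yM: "y \<in> M" using y KM by blast
        have "\<phi> s y' = \<phi> (s \<otimes>\<^bsub>G\<^esub> inv\<^bsub>G\<^esub> s) y" unfolding y'_def using act3[OF s invs yM] by simp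
        also have "\<dots> = y" using s act2[OF yM] by simp
        finally have sy': "\<phi> s y' = y" .
        have y'M: "y' \<in> M" using y'K KM by blast
        have on: "orbit (\<phi> s) y' \<noteq> {}" unfolding orbit_def by blast
        have oK: "orbit (\<phi> s) y' \<subseteq> K" using orbK[OF s y'K] .
        have oM: "orbit (\<phi> s) y' \<subseteq> M" using oK KM by blast
        have "d (\<phi> s z) y = d (\<phi> s z) (\<phi> s y')" using sy' by simp
        also have "\<dots> \<le> Dist_set d z (orbit (\<phi> s) y')"
          using assms(8) s zM y'M unfolding orbit_nonexpansive_def by blast
        also have "\<dots> \<le> Dist_set d z K"
        proof -
          have "\<forall>a\<in>orbit (\<phi> s) y'. d z a \<le> Dist_set d z K"
          proof
            fix a assume "a \<in> orbit (\<phi> s) y'"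
            then have "a \<in> K" using oK by blast
            then show "d z a \<le> Dist_set d z K" using Dup[OF KM _ zM] by blast
          qed
          then show ?thesis using Dle[OF oM on zM] by blast
        qed
        finally show "d (\<phi> s z) y \<le> r" using zr by linarith
      qed
      then have "Dist_set d (\<phi> s z) K \<le> r" using Dle[OF KM Kne szM] by blast
      then show "\<phi> s z \<in> C" using memC szK by blast
    qed
    have "z0 \<in> C" using memC z0(1) r_def by simp
    then have "C \<noteq> {}" by blast
    then have "C \<in> \<K>" using Cadm Cinv unfolding \<K>_def by blast
    moreover have "C \<subseteq> K" unfolding C_def by blast
    ultimately have "C = K" using Kmin by blast
    then have all: "\<forall>z\<in>K. Dist_set d z K \<le> r" using memC by blast
    have "diam_set d K \<le> r" unfolding diam_set_def
    proof (rule cSUP_least)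
      show "K \<times> K \<noteq> {}" using Kne by blast
      fix p assume p: "p \<in> K \<times> K"
      then have f: "fst p \<in> K" and sn: "snd p \<in> K" by auto
      have fM: "fst p \<in> M" using f KM by blast
      have "Dist_set d (fst p) K \<le> r" using all f by blast
      then show "d (fst p) (snd p) \<le> r" using Dle[OF KM Kne fM] sn by blast
    qed
    then show False using z0(2) r_def by linarith
  qed
  obtain x where x: "x \<in> K" using Kne by blast
  have "\<forall>s\<in>carrier G. \<phi> s x = x"
  proof
    fix s assume s: "s \<in> carrier G"
    then have "\<phi> s x \<in> K" using x Kinv unfolding inv_set_def by blast
    then show "\<phi> s x = x" using single x by blast
  qed
  then show ?thesis using x KM by blast
qed

end
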